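(* For $n\in\mathbb N$ let $a(n)=\lfloor n\varphi\rfloor$, $b(n)=\lfloor n\varphi^2\rfloor$, $m(n)=\lfloor\varphi n\rfloor-n+1$, $f(n)=b(n)$, $g(n)=b(n)-1$, $h(n)=2a(n)+n$. Then for every $k\in\mathbb N$: (i) $m(f(a(k)))=b(k)$; (ii) $m(f(b(k)))+1=b(a(k)+1)$; (iii) $m(g(a(k)))+1=b(k)$; (iv) $m(g(b(k)))+2=b(a(k)+1)$; (v) $m(h(a(k)))+3=b(a(k)+1)$; (vi) $m(h(b(k)))+2=b(b(k)+1)$.
   Context: $\mathbb N=\{1,2,\dots\}$, $\varphi=\frac{1+\sqrt5}{2}$ is the golden ratio. *)

theory Defs
  imports Complex_Main
begin

definition phi :: real where "phi = (1 + sqrt 5) / 2"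

definition wa :: "nat \<Rightarrow> nat" where "wa n = nat \<lfloor>real n * phi\<rfloor>"
definition wb :: "nat \<Rightarrow> nat" where "wb n = nat \<lfloor>real n * phi ^ 2\<rfloor>"
definition wm :: "nat \<Rightarrow> nat" where "wm n = nat \<lfloor>phi * real n\<rfloor> - n + 1"
definition wf :: "nat \<Rightarrow> nat" where "wf n = wb n"
definition wg :: "nat \<Rightarrow> nat" where "wg n = wb n - 1"
definition wh :: "nat \<Rightarrow> nat" where "wh n = 2 * wa n + n"

end

theory Submission
  imports Defs "HOL-Computational_Algebra.Primes"
begin

lemma no_sq: "(m::nat)^2 = 5 * k^2 \<Longrightarrow> k = 0"
proof (induction k arbitrary: m rule: less_induct)
  case (less k)
  have p5: "prime (5::nat)" by simp
  have "5 dvd m^2" using less.prems by simp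
  then have "5 dvd m" using p5 prime_dvd_power by blast
  then obtain m' where m: "m = 5*m'" by blast
  have "k^2 = 5 * m'^2" using less.prems m by (simp add: power_mult_distrib)
  then have "5 dvd k^2" by simp
  then have "5 dvd k" using p5 prime_dvd_power by blast
  then obtain k' where kk: "k = 5*k'" by blast
  have eq: "m'^2 = 5 * k'^2" using \<open>k^2 = 5 * m'^2\<close> kk by (simp add: power_mult_distrib)
  show ?case
  proof (rule ccontr)
    assume "k \<noteq> 0"
    then have "k' < k" using kk by simp
    then have "k' = 0" using less.IH eq by blast
    then show False using kk \<open>k \<noteq> 0\<close> by simp
  qed
qed

lemma phi_sq: "phi^2 = phi + 1"
  unfolding phi_def by (simp add: power2_eq_square field_simps)

lemma phi_bounds: "(1618/1000) < phi \<and> phi < (16181/10000)"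
proof -
  have a: "(2236/1000) < sqrt 5" by (rule real_less_rsqrt) (simp add: power2_eq_square)
  have "sqrt 5 < sqrt ((22362/10000)^2)" by (subst real_sqrt_less_iff) (simp add: power2_eq_square)
  then have b: "sqrt 5 < 22362/10000" by simp
  show ?thesis using a b unfolding phi_def by simp
qed

lemma not_int: assumes "k \<ge> 1" shows "real k * phi \<noteq> of_int z"
proof
  assume h: "real k * phi = of_int z"
  then have "real k * sqrt 5 = of_int (2*z - int k)" unfolding phi_def by (simp add: field_simps)
  then have "(real k * sqrt 5)^2 = (of_int (2*z - int k))^2" by simp
  then have "real (5 * k^2) = of_int ((2*z - int k)^2)" by (simp add: power_mult_distrib)
  then have "int (5 * k^2) = (2*z - int k)^2"
    by (metis of_int_eq_iff of_int_of_nat_eq)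
  then have "int (5 * k^2) = int ((nat \<bar>2*z - int k\<bar>)^2)" by simp
  then have "(nat \<bar>2*z - int k\<bar>)^2 = 5 * k^2" by linarith
  then have "k = 0" by (rule no_sq)
  then show False using assms by simp
qed

lemma wa_eq: "of_int z \<le> real n * phi \<Longrightarrow> real n * phi < of_int z + 1 \<Longrightarrow> wa n = nat z"
  unfolding wa_def by (simp add: floor_unique)

lemma wa_lin: "real n * phi = of_int z + t \<Longrightarrow> 0 \<le> t \<Longrightarrow> t < 1 \<Longrightarrow> wa n = nat z"
  by (rule wa_eq) auto

lemma wb_wa: "wb n = wa n + n"
proof -
  have "real n * phi^2 = real n * phi + of_int (int n)" by (simp add: phi_sq algebra_simps)
  then have "\<lfloor>real n * phi^2\<rfloor> = \<lfloor>real n * phi\<rfloor> + int n" by simp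
  moreover have "\<lfloor>real n * phi\<rfloor> \<ge> 0" using phi_bounds by simp
  ultimately show ?thesis unfolding wb_def wa_def by (simp add: nat_add_distrib)
qed

lemma wm_wa: "wm n = wa n - n + 1"
  unfolding wm_def wa_def by (simp add: mult.commute)

theorem lemma5p4:
  fixes k :: nat
  assumes "k \<ge> 1"
  shows "wm (wf (wa k)) = wb k \<and>
    wm (wf (wb k)) + 1 = wb (wa k + 1) \<and>
    wm (wg (wa k)) + 1 = wb k \<and>
    wm (wg (wb k)) + 2 = wb (wa k + 1) \<and>
    wm (wh (wa k)) + 3 = wb (wa k + 1) \<and>
    wm (wh (wb k)) + 2 = wb (wb k + 1)"
proof -
  define A where "A = wa k"
  have fl: "real A = of_int \<lfloor>real k * phi\<rfloor>" unfolding A_def wa_def using phi_bounds by simp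
  define e where "e = real k * phi - real A"
  define u where "u = e * phi"
  have pb: "(1618/1000) < phi" "phi < (16181/10000)" using phi_bounds by auto
  have e0: "e \<ge> 0" "e < 1" unfolding e_def fl by (simp_all add: floor_less_iff) linarith
  have "e \<noteq> 0" using not_int[OF assms, of "\<lfloor>real k * phi\<rfloor>"] unfolding e_def fl by simp
  with e0 have e1: "0 < e" "e < 1" by auto
  have u1: "(1618/1000) * e < u" "u < (16181/10000) * e" unfolding u_def using e1 pb by simp_all
  have "0 < (phi - 1618/1000) * (1 - e)" using pb e1 by simp
  then have u2: "u < phi - 1618/1000 + (1618/1000) * e" unfolding u_def by (simp add: algebra_simps) (simp add: field_simps)
  have "0 < (16181/10000 - phi) * (1 - e)" using pb e1 by simp
  then have u3: "u > phi - 16181/10000 + (16181/10000) * e" unfolding u_def by (simp add: algebra_simps) (simp add: field_simps)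
  have kp: "real k * phi = real A + e" unfolding e_def by simp
  have Ap: "real A * phi = real A + e + real k - u"
  proof -
    have "real A * phi = (real k * phi - e) * phi" unfolding e_def by simp
    also have "\<dots> = real k * phi^2 - u" unfolding u_def by (simp add: power2_eq_square algebra_simps)
    also have "\<dots> = real A + e + real k - u" using kp by (simp add: phi_sq algebra_simps)
    finally show ?thesis .
  qed
  have k1: "real k \<ge> 1" using assms by simp
  have "real k * phi \<ge> phi" using k1 pb by simp
  then have "real A > 0" using kp e1 pb by linarith
  then have A1: "A \<ge> 1" by simp
  have wbk: "wb k = A + k" using A_def wb_wa by simp
  have "wa A = nat (int A + int k - 1)"
    by (rule wa_eq) (use Ap e1 u1 in simp_all)
  then have waA: "wa A = A + k - 1" by simp
  have w0: "wa (2*A+k-1) = nat (3*int A + 2*int k + (-2))"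
  proof (rule wa_lin)
    have "real (2*A+k-1) = 2*real A + 1*real k + (-1)" using A1 assms by (simp add: of_nat_diff)
    then show "real (2*A+k-1) * phi = of_int (3*int A + 2*int k + (-2)) + (3*e - 2*u + (-1)*phi - (-2))"
      using Ap kp by (simp add: algebra_simps)
    show "0 \<le> 3*e - 2*u + (-1)*phi - (-2)" using e1 u1 u2 u3 pb by linarith
    show "3*e - 2*u + (-1)*phi - (-2) < 1" using e1 u1 u2 u3 pb by linarith
  qed
  have w1: "wa (3*A+2*k) = nat (5*int A + 3*int k + (0))"
  proof (rule wa_lin)
    have "real (3*A+2*k) = 3*real A + 2*real k + (0)" using A1 assms by (simp add: of_nat_diff)
    then show "real (3*A+2*k) * phi = of_int (5*int A + 3*int k + (0)) + (5*e - 3*u + (0)*phi - (0))"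
      using Ap kp by (simp add: algebra_simps)
    show "0 \<le> 5*e - 3*u + (0)*phi - (0)" using e1 u1 u2 u3 pb by linarith
    show "5*e - 3*u + (0)*phi - (0) < 1" using e1 u1 u2 u3 pb by linarith
  qed
  have w2: "wa (A+1) = nat (1*int A + 1*int k + (1))"
  proof (rule wa_lin)
    have "real (A+1) = 1*real A + 0*real k + (1)" using A1 assms by (simp add: of_nat_diff)
    then show "real (A+1) * phi = of_int (1*int A + 1*int k + (1)) + (1*e - 1*u + (1)*phi - (1))"
      using Ap kp by (simp add: algebra_simps)
    show "0 \<le> 1*e - 1*u + (1)*phi - (1)" using e1 u1 u2 u3 pb by linarith
    show "1*e - 1*u + (1)*phi - (1) < 1" using e1 u1 u2 u3 pb by linarith
  qed
  have w3: "wa (2*A+k-2) = nat (3*int A + 2*int k + (-4))"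
  proof (rule wa_lin)
    have "real (2*A+k-2) = 2*real A + 1*real k + (-2)" using A1 assms by (simp add: of_nat_diff)
    then show "real (2*A+k-2) * phi = of_int (3*int A + 2*int k + (-4)) + (3*e - 2*u + (-2)*phi - (-4))"
      using Ap kp by (simp add: algebra_simps)
    show "0 \<le> 3*e - 2*u + (-2)*phi - (-4)" using e1 u1 u2 u3 pb by linarith
    show "3*e - 2*u + (-2)*phi - (-4) < 1" using e1 u1 u2 u3 pb by linarith
  qed
  have w4: "wa (3*A+2*k-1) = nat (5*int A + 3*int k + (-2))"
  proof (rule wa_lin)
    have "real (3*A+2*k-1) = 3*real A + 2*real k + (-1)" using A1 assms by (simp add: of_nat_diff)
    then show "real (3*A+2*k-1) * phi = of_int (5*int A + 3*int k + (-2)) + (5*e - 3*u + (-1)*phi - (-2))"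
      using Ap kp by (simp add: algebra_simps)
    show "0 \<le> 5*e - 3*u + (-1)*phi - (-2)" using e1 u1 u2 u3 pb by linarith
    show "5*e - 3*u + (-1)*phi - (-2) < 1" using e1 u1 u2 u3 pb by linarith
  qed
  have w5: "wa (3*A+2*k-2) = nat (5*int A + 3*int k + (-4))"
  proof (rule wa_lin)
    have "real (3*A+2*k-2) = 3*real A + 2*real k + (-2)" using A1 assms by (simp add: of_nat_diff)
    then show "real (3*A+2*k-2) * phi = of_int (5*int A + 3*int k + (-4)) + (5*e - 3*u + (-2)*phi - (-4))"
      using Ap kp by (simp add: algebra_simps)
    show "0 \<le> 5*e - 3*u + (-2)*phi - (-4)" using e1 u1 u2 u3 pb by linarith
    show "5*e - 3*u + (-2)*phi - (-4) < 1" using e1 u1 u2 u3 pb by linarith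
  qed
  have w6: "wa (5*A+3*k) = nat (8*int A + 5*int k + (-1))"
  proof (rule wa_lin)
    have "real (5*A+3*k) = 5*real A + 3*real k + (0)" using A1 assms by (simp add: of_nat_diff)
    then show "real (5*A+3*k) * phi = of_int (8*int A + 5*int k + (-1)) + (8*e - 5*u + (0)*phi - (-1))"
      using Ap kp by (simp add: algebra_simps)
    show "0 \<le> 8*e - 5*u + (0)*phi - (-1)" using e1 u1 u2 u3 pb by linarith
    show "8*e - 5*u + (0)*phi - (-1) < 1" using e1 u1 u2 u3 pb by linarith
  qed
  have w7: "wa (A+k+1) = nat (2*int A + 1*int k + (1))"
  proof (rule wa_lin)
    have "real (A+k+1) = 1*real A + 1*real k + (1)" using A1 assms by (simp add: of_nat_diff)
    then show "real (A+k+1) * phi = of_int (2*int A + 1*int k + (1)) + (2*e - 1*u + (1)*phi - (1))"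
      using Ap kp by (simp add: algebra_simps)
    show "0 \<le> 2*e - 1*u + (1)*phi - (1)" using e1 u1 u2 u3 pb by linarith
    show "2*e - 1*u + (1)*phi - (1) < 1" using e1 u1 u2 u3 pb by linarith
  qed
  have w8: "wa (A+k) = nat (2*int A + 1*int k + (0))"
  proof (rule wa_lin)
    have "real (A+k) = 1*real A + 1*real k + (0)" using A1 assms by (simp add: of_nat_diff)
    then show "real (A+k) * phi = of_int (2*int A + 1*int k + (0)) + (2*e - 1*u + (0)*phi - (0))"
      using Ap kp by (simp add: algebra_simps)
    show "0 \<le> 2*e - 1*u + (0)*phi - (0)" using e1 u1 u2 u3 pb by linarith
    show "2*e - 1*u + (0)*phi - (0) < 1" using e1 u1 u2 u3 pb by linarith
  qed
  have bA: "wb A = 2*A+k-1" using waA wb_wa A1 by simp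
  have bB: "wb (A+k) = 3*A+2*k" using w8 wb_wa by simp
  have b1: "wb (A+1) = 2*A+k+2" using w2 wb_wa by simp
  have b2: "wb (A+k+1) = 3*A+2*k+2" using w7 wb_wa by simp
  have c0: "wa (2*A+k-1) = 3*A+2*k-2" using w0 A1 assms by simp
  have c1: "wa (3*A+2*k) = 5*A+3*k" using w1 by simp
  have c3: "wa (2*A+k-2) = 3*A+2*k-4" using w3 A1 assms by simp
  have c4: "wa (3*A+2*k-1) = 5*A+3*k-2" using w4 A1 assms by simp
  have c5: "wa (3*A+2*k-2) = 5*A+3*k-4" using w5 A1 assms by simp
  have c6: "wa (5*A+3*k) = 8*A+5*k-1" using w6 A1 assms by simp
  have hA: "wh A = 3*A+2*k-2" unfolding wh_def using waA A1 assms by simp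
  have hB: "wh (A+k) = 5*A+3*k" unfolding wh_def using w8 by simp
  have gA: "wg A = 2*A+k-2" unfolding wg_def using bA by simp
  have gB: "wg (A+k) = 3*A+2*k-1" unfolding wg_def using bB by simp
  have fA: "wf A = 2*A+k-1" unfolding wf_def using bA by simp
  have fB: "wf (A+k) = 3*A+2*k" unfolding wf_def using bB by simp
  show ?thesis
    unfolding A_def[symmetric] wbk fA fB gA gB hA hB wm_wa c0 c1 c3 c4 c5 c6 b1 b2
    using A1 assms by simp
qed

end
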